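(* For every nonnegative integer $n$, $$\sum_{k=0}^{\infty}(-1)^k(4k+1)\,\frac{(-n)_k^2\,(\tfrac12)_k}{k!\,(n+\tfrac32)_k^2}=\left(\frac14\right)^n\frac{(\tfrac32)_n^2}{(\tfrac54)_n(\tfrac34)_n}.$$ (The sum is finite, since $(-n)_k=0$ for $k>n$.)
   Context: $(a)_j=\Gamma(a+j)/\Gamma(a)=a(a+1)\cdots(a+j-1)$ denotes the rising factorial (Pochhammer symbol), with $(a)_0=1$. *)

theory Defs
  imports "HOL-Analysis.Analysis"
begin

end

theory Submission
  imports Defs
begin

definition TT :: "real \<Rightarrow> nat \<Rightarrow> real" where
  "TT x k = (-1) ^ k * (4 * real k + 1) * (pochhammer (- x) k) ^ 2 * pochhammer (1/2) k
            / (fact k * (pochhammer (x + 3/2) k) ^ 2)"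

definition pp :: "real \<Rightarrow> real \<Rightarrow> real" where
  "pp n k = 8*k^4+(20+16*n)*k^3+(-10-24*n-16*n^2)*k^2+(-57-164*n-156*n^2-48*n^3)*k
     +(-36-138*n-190*n^2-112*n^3-24*n^4)"

definition GG :: "real \<Rightarrow> nat \<Rightarrow> real" where
  "GG x k = TT (x+1) k * real k * pp x (real k) / ((4*real k+1)*(4*x+3)*(4*x+5)*(x+1)^2)"

definition rr :: "real \<Rightarrow> real" where
  "rr x = (2*x+3)^2/((4*x+5)*(4*x+3))"

lemma rat_id:
  fixes x k :: real
  assumes "x \<ge> 0" "k \<ge> 0"
  shows "(4*k+1)*(x+3/2)^2/(x+3/2+k)^2 - rr x * ((4*k+1)*((k-x-1)/(-x-1))^2)
   = (-(4*k+5)*(k-x-1)^2*(1/2+k)*(x+3/2)^2/((k+1)*(x+3/2+k)^2*(x+5/2+k)^2)) * (k+1) * pp x (k+1)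
       / ((4*(k+1)+1)*(4*x+3)*(4*x+5)*(x+1)^2)
     - (4*k+1)*(x+3/2)^2/(x+3/2+k)^2 * k * pp x k / ((4*k+1)*(4*x+3)*(4*x+5)*(x+1)^2)"
proof -
  have a: "x+3/2+k > 0" "x+5/2+k > 0" "k+1>0" "-x-1 \<noteq> 0" "4*k+1 > 0" "4*x+3>0" "4*x+5>0" "x+1>0"
    "4*(k+1)+1 > 0"
    using assms by auto
  show ?thesis unfolding rr_def pp_def
    using a by (simp add: divide_simps) algebra
qed

lemma key:
  fixes x :: real
  assumes x: "x \<ge> 0"
  shows "TT (x+1) k - rr x * TT x k = GG x (Suc k) - GG x k"
proof -
  define P where "P = pochhammer (-x-1) k"
  define Q where "Q = pochhammer (x+3/2) k"
  define H where "H = pochhammer (1/2::real) k"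
  define B where "B = (-1)^k * P^2 * H / (fact k * Q^2)"
  have Qpos: "Q > 0" unfolding Q_def using x by (intro pochhammer_pos) auto
  have e1: "pochhammer (-x) k = P*(real k-x-1)/(-x-1)"
  proof -
    have "pochhammer (-x-1) (Suc k) = (-x-1) * pochhammer (-x) k"
      by (subst pochhammer_rec) simp
    moreover have "pochhammer (-x-1) (Suc k) = P * (real k - x - 1)"
      unfolding P_def by (subst pochhammer_Suc) simp
    ultimately show ?thesis using x by (simp add: field_simps)
  qed
  have e2: "pochhammer (x+5/2) k = Q*(x+3/2+real k)/(x+3/2)"
  proof -
    have "pochhammer (x+3/2) (Suc k) = (x+3/2) * pochhammer (x+5/2) k"
      by (subst pochhammer_rec) (simp add: algebra_simps)
    moreover have "pochhammer (x+3/2) (Suc k) = Q * (x+3/2+real k)"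
      unfolding Q_def by (subst pochhammer_Suc) simp
    ultimately show ?thesis using x by (simp add: field_simps)
  qed
  have T0: "TT x k = B * ((4*real k+1)*((real k-x-1)/(-x-1))^2)"
    unfolding TT_def B_def e1 Q_def[symmetric] H_def[symmetric] using x Qpos by (simp add: field_simps power2_eq_square)
  have pos: "x+3/2+real k>0" "x+5/2+real k>0" "x+3/2>0" "real k + 1 > 0" using x by auto
  have hh: "- (x+1) = -x-1" "x+1+3/2 = x+5/2" by simp_all
  have T1: "TT (x+1) k = B * ((4*real k+1)*(x+3/2)^2/(x+3/2+real k)^2)"
  proof -
    have "TT (x+1) k = (-1) ^ k * (4 * real k + 1) * P ^ 2 * H
            / (fact k * (pochhammer (x + 5/2) k) ^ 2)"
      unfolding TT_def P_def H_def hh by simp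
    also have "\<dots> = B * ((4*real k+1)*(x+3/2)^2/(x+3/2+real k)^2)"
      unfolding e2 B_def using x Qpos pos by (simp add: field_simps power2_eq_square)
    finally show ?thesis .
  qed
  have T2: "TT (x+1) (Suc k) = B * (-(4*real k+5)*(real k-x-1)^2*(1/2+real k)*(x+3/2)^2
        /((real k+1)*(x+3/2+real k)^2*(x+5/2+real k)^2))"
  proof -
    have "TT (x+1) (Suc k) = (-1) ^ Suc k * (4 * real (Suc k) + 1) * (P * (real k - x - 1)) ^ 2 * (H * (1/2 + real k))
            / (fact k * (real k + 1) * (pochhammer (x + 5/2) k * (x+5/2+real k)) ^ 2)"
      unfolding TT_def P_def H_def hh by (simp add: pochhammer_Suc algebra_simps)
    also have "\<dots> = B * (-(4*real k+5)*(real k-x-1)^2*(1/2+real k)*(x+3/2)^2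
        /((real k+1)*(x+3/2+real k)^2*(x+5/2+real k)^2))"
      unfolding e2 B_def using x Qpos pos by (simp add: field_simps power2_eq_square)
    finally show ?thesis .
  qed
  have R: "(4*real k+1)*(x+3/2)^2/(x+3/2+real k)^2 - rr x * ((4*real k+1)*((real k-x-1)/(-x-1))^2)
   = (-(4*real k+5)*(real k-x-1)^2*(1/2+real k)*(x+3/2)^2/((real k+1)*(x+3/2+real k)^2*(x+5/2+real k)^2)) * (real k+1) * pp x (real k+1)
       / ((4*(real k+1)+1)*(4*x+3)*(4*x+5)*(x+1)^2)
     - (4*real k+1)*(x+3/2)^2/(x+3/2+real k)^2 * real k * pp x (real k) / ((4*real k+1)*(4*x+3)*(4*x+5)*(x+1)^2)"
    by (rule rat_id) (use x in auto)
  have "GG x (Suc k) - GG x k = B * ((-(4*real k+5)*(real k-x-1)^2*(1/2+real k)*(x+3/2)^2/((real k+1)*(x+3/2+real k)^2*(x+5/2+real k)^2)) * (real k+1) * pp x (real k+1)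
       / ((4*(real k+1)+1)*(4*x+3)*(4*x+5)*(x+1)^2)
     - (4*real k+1)*(x+3/2)^2/(x+3/2+real k)^2 * real k * pp x (real k) / ((4*real k+1)*(4*x+3)*(4*x+5)*(x+1)^2))"
    unfolding GG_def T1 T2 by (simp add: algebra_simps)
  also have "\<dots> = TT (x+1) k - rr x * TT x k"
    unfolding T0 T1 R[symmetric] by (simp add: algebra_simps)
  finally show ?thesis by simp
qed

lemma tele:
  fixes x :: real
  assumes x: "x \<ge> 0"
  shows "(\<Sum>k<m. TT (x+1) k) = rr x * (\<Sum>k<m. TT x k) + GG x m"
proof (induction m)
  case 0
  then show ?case by (simp add: GG_def)
next
  case (Suc m)
  then show ?case using key[OF x, of m] by (simp add: algebra_simps)
qed

lemma TT_zero: "n < k \<Longrightarrow> TT (real n) k = 0"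
  unfolding TT_def using pochhammer_of_nat_eq_0_iff[of n k, where 'a=real] by simp

definition RHS :: "nat \<Rightarrow> real" where
  "RHS n = (1/4) ^ n * (pochhammer (3/2) n) ^ 2 / (pochhammer (5/4) n * pochhammer (3/4) n)"

lemma finite_sum: "(\<Sum>k<Suc n. TT (real n) k) = RHS n"
proof (induction n)
  case 0
  then show ?case by (simp add: TT_def RHS_def)
next
  case (Suc n)
  have r1: "real (Suc n) = real n + 1" by simp
  have g0: "GG (real n) (Suc (Suc n)) = 0"
  proof -
    have "TT (real n + 1) (Suc (Suc n)) = 0" using TT_zero[of "Suc n" "Suc (Suc n)", unfolded r1] by simp
    then show ?thesis by (simp add: GG_def)
  qed
  have "(\<Sum>k<Suc (Suc n). TT (real (Suc n)) k) = rr (real n) * (\<Sum>k<Suc (Suc n). TT (real n) k)"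
    unfolding r1 using tele[of "real n" "Suc (Suc n)"] g0 by simp
  also have "(\<Sum>k<Suc (Suc n). TT (real n) k) = (\<Sum>k<Suc n. TT (real n) k)"
    using TT_zero[of n "Suc n"] by simp
  finally have s1: "(\<Sum>k<Suc (Suc n). TT (real (Suc n)) k) = rr (real n) * (\<Sum>k<Suc n. TT (real n) k)" .
  have r3: "rr (real n) * RHS n = RHS (Suc n)"
  proof -
    have a: "pochhammer (5/4::real) n > 0" "pochhammer (3/4::real) n > 0" "pochhammer (3/2::real) n > 0"
      by (auto intro: pochhammer_pos)
    have b: "4 * real n + 5 > 0" "4 * real n + 3 > 0" "5/4 + real n > 0" "3/4 + real n > 0" "(4::real)^n > 0" by auto
    have "rr (real n) * RHS n = ((1/4)^n/4) * (pochhammer (3/2) n * (3/2 + real n))^2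
       / ((pochhammer (5/4) n * (5/4 + real n)) * (pochhammer (3/4) n * (3/4 + real n)))"
      unfolding rr_def RHS_def using a b by (simp add: divide_simps) algebra
    also have "\<dots> = RHS (Suc n)" unfolding RHS_def pochhammer_Suc by (simp add: power_Suc2 add.commute)
    finally show ?thesis .
  qed
  show ?case using s1 r3 Suc by simp
qed

theorem theorem1:
  fixes n :: nat
  shows "(\<lambda>k. (-1) ^ k * (4 * real k + 1) * (pochhammer (- real n) k) ^ 2 * pochhammer (1/2) k
            / (fact k * (pochhammer (real n + 3/2) k) ^ 2))
         sums ((1/4) ^ n * (pochhammer (3/2) n) ^ 2 / (pochhammer (5/4) n * pochhammer (3/4) n))"
proof -
  have "(\<lambda>k. TT (real n) k) sums (\<Sum>k<Suc n. TT (real n) k)"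
    by (rule sums_finite) (auto intro: TT_zero)
  then have "(\<lambda>k. TT (real n) k) sums RHS n" by (simp only: finite_sum)
  then show ?thesis unfolding RHS_def TT_def .
qed

end
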